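(* Let $\Gamma$ be a distance-regular graph with diameter $D\ge 3$, and let $\sigma_0,\dots,\sigma_D$ and $\rho_0,\dots,\rho_D$ be nontrivial pseudo cosine sequences of $\Gamma$. Then the following are equivalent: (i) $\sigma_0,\dots,\sigma_D$ and $\rho_0,\dots,\rho_D$ form a tight pair; (ii) there exists a real number $\varepsilon$ such that $$\sigma_i\rho_i-\sigma_{i-1}\rho_{i-1}=\varepsilon(\sigma_{i-1}\rho_i-\sigma_i\rho_{i-1})\qquad(1\le i\le D).$$
   Context: $\Gamma$ is a finite connected undirected graph without loops or multiple edges, distance-regular with diameter $D$, intersection numbers $a_i,b_i,c_i$ ($c_0=0$, $b_D=0$), valency $k$, $c_i+a_i+b_i=k$. For $\theta\in\mathbb{R}$ the pseudo cosine sequence for $\theta$ is the sequence of reals $\sigma_0,\dots,\sigma_D$ with $\sigma_0=1$ and $c_i\sigma_{i-1}+a_i\sigma_i+b_i\sigma_{i+1}=\theta\sigma_i$ for $0\le i\le D-1$. It is nontrivial if $\sigma_1\ne1$ (the trivial one is that for $\theta=k$, all ones). Pseudo cosine sequences $\sigma_i$, $\rho_i$ form a tight pair if $(\sigma_i\rho_i)_{i=0}^D$ is a pseudo cosine sequence. *)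

theory Defs
  imports Complex_Main
begin

definition simple_graph :: "'a set \<Rightarrow> ('a \<Rightarrow> 'a \<Rightarrow> bool) \<Rightarrow> bool" where
  "simple_graph V E \<longleftrightarrow> (\<forall>x y. E x y \<longrightarrow> x \<in> V \<and> y \<in> V \<and> x \<noteq> y \<and> E y x)"

definition walk :: "('a \<Rightarrow> 'a \<Rightarrow> bool) \<Rightarrow> 'a list \<Rightarrow> bool" where
  "walk E xs \<longleftrightarrow> xs \<noteq> [] \<and> (\<forall>i. Suc i < length xs \<longrightarrow> E (xs ! i) (xs ! Suc i))"

definition dist_g :: "('a \<Rightarrow> 'a \<Rightarrow> bool) \<Rightarrow> 'a \<Rightarrow> 'a \<Rightarrow> nat" where
  "dist_g E x y = (LEAST n. \<exists>xs. walk E xs \<and> length xs = Suc n \<and> hd xs = x \<and> last xs = y)"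

definition connected_g :: "'a set \<Rightarrow> ('a \<Rightarrow> 'a \<Rightarrow> bool) \<Rightarrow> bool" where
  "connected_g V E \<longleftrightarrow> (\<forall>x\<in>V. \<forall>y\<in>V. \<exists>xs. walk E xs \<and> hd xs = x \<and> last xs = y)"

definition diameter :: "'a set \<Rightarrow> ('a \<Rightarrow> 'a \<Rightarrow> bool) \<Rightarrow> nat" where
  "diameter V E = Max {dist_g E x y | x y. x \<in> V \<and> y \<in> V}"

definition c_cnt :: "'a set \<Rightarrow> ('a \<Rightarrow> 'a \<Rightarrow> bool) \<Rightarrow> 'a \<Rightarrow> 'a \<Rightarrow> nat" where
  "c_cnt V E x y = card {z \<in> V. E y z \<and> dist_g E x z + 1 = dist_g E x y}"
definition a_cnt :: "'a set \<Rightarrow> ('a \<Rightarrow> 'a \<Rightarrow> bool) \<Rightarrow> 'a \<Rightarrow> 'a \<Rightarrow> nat" where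
  "a_cnt V E x y = card {z \<in> V. E y z \<and> dist_g E x z = dist_g E x y}"
definition b_cnt :: "'a set \<Rightarrow> ('a \<Rightarrow> 'a \<Rightarrow> bool) \<Rightarrow> 'a \<Rightarrow> 'a \<Rightarrow> nat" where
  "b_cnt V E x y = card {z \<in> V. E y z \<and> dist_g E x z = dist_g E x y + 1}"

definition distance_regular :: "'a set \<Rightarrow> ('a \<Rightarrow> 'a \<Rightarrow> bool) \<Rightarrow> bool" where
  "distance_regular V E \<longleftrightarrow> finite V \<and> V \<noteq> {} \<and> simple_graph V E \<and> connected_g V E \<and>
     (\<forall>i. \<exists>n. \<forall>x\<in>V. \<forall>y\<in>V. dist_g E x y = i \<longrightarrow> c_cnt V E x y = n) \<and>
     (\<forall>i. \<exists>n. \<forall>x\<in>V. \<forall>y\<in>V. dist_g E x y = i \<longrightarrow> a_cnt V E x y = n) \<and>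
     (\<forall>i. \<exists>n. \<forall>x\<in>V. \<forall>y\<in>V. dist_g E x y = i \<longrightarrow> b_cnt V E x y = n)"

text \<open>Intersection numbers c_i, a_i, b_i (meaningful for a distance-regular graph, 0 \<le> i \<le> D).\<close>
definition c_i :: "'a set \<Rightarrow> ('a \<Rightarrow> 'a \<Rightarrow> bool) \<Rightarrow> nat \<Rightarrow> nat" where
  "c_i V E i = (SOME n. \<forall>x\<in>V. \<forall>y\<in>V. dist_g E x y = i \<longrightarrow> c_cnt V E x y = n)"
definition a_i :: "'a set \<Rightarrow> ('a \<Rightarrow> 'a \<Rightarrow> bool) \<Rightarrow> nat \<Rightarrow> nat" where
  "a_i V E i = (SOME n. \<forall>x\<in>V. \<forall>y\<in>V. dist_g E x y = i \<longrightarrow> a_cnt V E x y = n)"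
definition b_i :: "'a set \<Rightarrow> ('a \<Rightarrow> 'a \<Rightarrow> bool) \<Rightarrow> nat \<Rightarrow> nat" where
  "b_i V E i = (SOME n. \<forall>x\<in>V. \<forall>y\<in>V. dist_g E x y = i \<longrightarrow> b_cnt V E x y = n)"

text \<open>Pseudo cosine sequence for \<theta>: sequence \<sigma>_0..\<sigma>_D (as nat \<Rightarrow> real; values beyond D irrelevant).
  For i = 0 the term c_0 \<sigma>_{-1} vanishes since c_0 = 0 (here \<sigma>(0-1) = \<sigma> 0 is multiplied by c_0).\<close>
definition pseudo_cosine_seq :: "'a set \<Rightarrow> ('a \<Rightarrow> 'a \<Rightarrow> bool) \<Rightarrow> real \<Rightarrow> (nat \<Rightarrow> real) \<Rightarrow> bool" where
  "pseudo_cosine_seq V E \<theta> \<sigma> \<longleftrightarrow> \<sigma> 0 = 1 \<and>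
     (\<forall>i < diameter V E.
        real (c_i V E i) * \<sigma> (i - 1) + real (a_i V E i) * \<sigma> i + real (b_i V E i) * \<sigma> (i + 1) = \<theta> * \<sigma> i)"

definition is_pseudo_cosine :: "'a set \<Rightarrow> ('a \<Rightarrow> 'a \<Rightarrow> bool) \<Rightarrow> (nat \<Rightarrow> real) \<Rightarrow> bool" where
  "is_pseudo_cosine V E \<sigma> \<longleftrightarrow> (\<exists>\<theta>. pseudo_cosine_seq V E \<theta> \<sigma>)"

definition nontrivial_pcs :: "'a set \<Rightarrow> ('a \<Rightarrow> 'a \<Rightarrow> bool) \<Rightarrow> (nat \<Rightarrow> real) \<Rightarrow> bool" where
  "nontrivial_pcs V E \<sigma> \<longleftrightarrow> is_pseudo_cosine V E \<sigma> \<and> \<sigma> 1 \<noteq> 1"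

definition tight_pair :: "'a set \<Rightarrow> ('a \<Rightarrow> 'a \<Rightarrow> bool) \<Rightarrow> (nat \<Rightarrow> real) \<Rightarrow> (nat \<Rightarrow> real) \<Rightarrow> bool" where
  "tight_pair V E \<sigma> \<rho> \<longleftrightarrow> is_pseudo_cosine V E \<sigma> \<and> is_pseudo_cosine V E \<rho> \<and>
     is_pseudo_cosine V E (\<lambda>i. \<sigma> i * \<rho> i)"

end

theory Submission
  imports Defs
begin


lemma walk_app: "walk E xs \<Longrightarrow> E (last xs) z \<Longrightarrow> walk E (xs @ [z])"
  unfolding walk_def
proof (intro conjI allI impI)
  fix i assume w: "xs \<noteq> [] \<and> (\<forall>i. Suc i < length xs \<longrightarrow> E (xs ! i) (xs ! Suc i))"
    and l: "E (last xs) z" and i: "Suc i < length (xs @ [z])"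
  show "E ((xs @ [z]) ! i) ((xs @ [z]) ! Suc i)"
  proof (cases "Suc i < length xs")
    case True thus ?thesis using w by (simp add: nth_append)
  next
    case False
    hence ii: "i = length xs - 1" "\<not> i < length xs - 1" using i by simp_all
    have "(xs @ [z]) ! i = last xs" using w ii by (simp add: nth_append last_conv_nth)
    moreover have "(xs @ [z]) ! Suc i = z" using ii w by (simp add: nth_append)
    ultimately show ?thesis using l by simp
  qed
qed simp

lemma walk_take: "walk E xs \<Longrightarrow> 0 < n \<Longrightarrow> walk E (take n xs)"
  unfolding walk_def by auto

lemma dist_ex:
  assumes "connected_g V E" "x \<in> V" "y \<in> V"
  shows "\<exists>xs. walk E xs \<and> length xs = Suc (dist_g E x y) \<and> hd xs = x \<and> last xs = y"
proof -
  obtain xs where xs: "walk E xs" "hd xs = x" "last xs = y" using assms unfolding connected_g_def by blast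
  hence "length xs = Suc (length xs - 1)" unfolding walk_def by (cases xs) auto
  hence "\<exists>n xs. walk E xs \<and> length xs = Suc n \<and> hd xs = x \<and> last xs = y" using xs by blast
  thus ?thesis unfolding dist_g_def by (rule LeastI_ex)
qed

lemma dist_le:
  assumes "walk E xs" "hd xs = x" "last xs = y"
  shows "dist_g E x y \<le> length xs - 1"
proof -
  have "length xs = Suc (length xs - 1)" using assms unfolding walk_def by (cases xs) auto
  hence "\<exists>ys. walk E ys \<and> length ys = Suc (length xs - 1) \<and> hd ys = x \<and> last ys = y" using assms by blast
  thus ?thesis unfolding dist_g_def by (rule Least_le)
qed

lemma dist_refl: "dist_g E x x = 0"
  using dist_le[of E "[x]" x x] unfolding walk_def by simp

lemma dist_0:
  assumes "connected_g V E" "x \<in> V" "y \<in> V" "dist_g E x y = 0"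
  shows "x = y"
proof -
  obtain xs where "walk E xs" "length xs = 1" "hd xs = x" "last xs = y" using dist_ex[OF assms(1-3)] assms(4) by auto
  thus ?thesis by (cases xs) auto
qed

lemma dist_nb:
  assumes "connected_g V E" "x \<in> V" "y \<in> V" "E y z"
  shows "dist_g E x z \<le> dist_g E x y + 1"
proof -
  obtain xs where xs: "walk E xs" "length xs = Suc (dist_g E x y)" "hd xs = x" "last xs = y" using dist_ex[OF assms(1-3)] by auto
  have "walk E (xs @ [z])" using walk_app[OF xs(1)] xs(4) assms(4) by simp
  moreover have "hd (xs @ [z]) = x" using xs unfolding walk_def by simp
  ultimately have "dist_g E x z \<le> length (xs @ [z]) - 1" using dist_le by fastforce
  thus ?thesis using xs(2) by simp
qed

lemma dist_1:
  assumes "simple_graph V E" "connected_g V E" "E x z"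
  shows "dist_g E x z = 1"
proof -
  have V: "x \<in> V" "z \<in> V" "x \<noteq> z" using assms unfolding simple_graph_def by auto
  have "dist_g E x z \<le> 1" using dist_nb[OF assms(2) V(1) V(1) assms(3)] dist_refl[of E x] by simp
  moreover have "dist_g E x z \<noteq> 0" using dist_0[OF assms(2) V(1,2)] V(3) by blast
  ultimately show ?thesis by simp
qed

lemma dist_back:
  assumes "simple_graph V E" "connected_g V E" "x \<in> V" "y \<in> V" "dist_g E x y = Suc n"
  shows "\<exists>z\<in>V. E y z \<and> E z y \<and> dist_g E x z = n"
proof -
  obtain xs where xs: "walk E xs" "length xs = Suc (Suc n)" "hd xs = x" "last xs = y" using dist_ex[OF assms(2-4)] assms(5) by auto
  define z where "z = xs ! n"
  have Ezy: "E z y" using xs unfolding walk_def z_def by (auto simp: last_conv_nth)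
  hence zV: "z \<in> V" and Eyz: "E y z" using assms(1) unfolding simple_graph_def by auto
  have w: "walk E (take (Suc n) xs)" using walk_take[OF xs(1)] by simp
  have "hd (take (Suc n) xs) = x" using xs by (cases xs) auto
  moreover have "last (take (Suc n) xs) = z" proof -
    have "take (Suc n) xs \<noteq> []" using xs(2) by (cases xs) auto
    hence "last (take (Suc n) xs) = take (Suc n) xs ! (length (take (Suc n) xs) - 1)" by (rule last_conv_nth)
    thus ?thesis using xs(2) unfolding z_def by simp
  qed
  ultimately have "dist_g E x z \<le> length (take (Suc n) xs) - 1" using dist_le[OF w] by blast
  hence "dist_g E x z \<le> n" using xs(2) by simp
  moreover have "dist_g E x y \<le> dist_g E x z + 1" using dist_nb[OF assms(2,3) zV Ezy] .
  ultimately have "dist_g E x z = n" using assms(5) by simp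
  thus ?thesis using zV Ezy Eyz by blast
qed

lemma c_i_eq: "distance_regular V E \<Longrightarrow> x \<in> V \<Longrightarrow> y \<in> V \<Longrightarrow> dist_g E x y = i \<Longrightarrow> c_i V E i = c_cnt V E x y"
  unfolding distance_regular_def c_i_def
  by (smt (verit) someI_ex)
lemma a_i_eq: "distance_regular V E \<Longrightarrow> x \<in> V \<Longrightarrow> y \<in> V \<Longrightarrow> dist_g E x y = i \<Longrightarrow> a_i V E i = a_cnt V E x y"
  unfolding distance_regular_def a_i_def
  by (smt (verit) someI_ex)
lemma b_i_eq: "distance_regular V E \<Longrightarrow> x \<in> V \<Longrightarrow> y \<in> V \<Longrightarrow> dist_g E x y = i \<Longrightarrow> b_i V E i = b_cnt V E x y"
  unfolding distance_regular_def b_i_def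
  by (smt (verit) someI_ex)


lemma drg_basic:
  assumes "distance_regular V E"
  shows "finite V" "V \<noteq> {}" "simple_graph V E" "connected_g V E"
  using assms unfolding distance_regular_def by auto

lemma diam_attained:
  assumes "distance_regular V E"
  shows "\<exists>x\<in>V. \<exists>y\<in>V. dist_g E x y = diameter V E"
proof -
  note b = drg_basic[OF assms]
  have eq: "{dist_g E x y | x y. x \<in> V \<and> y \<in> V} = (\<lambda>(x,y). dist_g E x y) ` (V \<times> V)" by auto
  have "finite {dist_g E x y | x y. x \<in> V \<and> y \<in> V}" unfolding eq using b by simp
  moreover have "{dist_g E x y | x y. x \<in> V \<and> y \<in> V} \<noteq> {}" using b by auto
  ultimately have "diameter V E \<in> {dist_g E x y | x y. x \<in> V \<and> y \<in> V}" unfolding diameter_def by (rule Max_in)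
  then obtain x y where "x \<in> V" "y \<in> V" "diameter V E = dist_g E x y" by blast
  thus ?thesis by metis
qed

lemma ex_pair:
  assumes "distance_regular V E" "m \<le> diameter V E"
  shows "\<exists>x\<in>V. \<exists>y\<in>V. dist_g E x y = m"
proof -
  note b = drg_basic[OF assms(1)]
  have "\<exists>x\<in>V. \<exists>y\<in>V. dist_g E x y = diameter V E - j" if "j \<le> diameter V E" for j
    using that
  proof (induction j)
    case 0 thus ?case using diam_attained[OF assms(1)] by simp
  next
    case (Suc j)
    then obtain x y where xy: "x \<in> V" "y \<in> V" "dist_g E x y = Suc (diameter V E - Suc j)" by fastforce
    from dist_back[OF b(3,4) xy] show ?case using xy(1) by blast
  qed
  from this[of "diameter V E - m"] assms(2) show ?thesis by simp
qed

lemma deg_eq: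
  assumes "distance_regular V E" "y \<in> V"
  shows "b_i V E 0 = card {z \<in> V. E y z}"
proof -
  note b = drg_basic[OF assms(1)]
  have "b_i V E 0 = b_cnt V E y y" using b_i_eq[OF assms(1) assms(2) assms(2)] dist_refl by metis
  moreover have "{z \<in> V. E y z \<and> dist_g E y z = dist_g E y y + 1} = {z \<in> V. E y z}"
    using dist_1[OF b(3,4)] dist_refl[of E y] by auto
  ultimately show ?thesis unfolding b_cnt_def by simp
qed

lemma partition_cnt:
  assumes "distance_regular V E" "x \<in> V" "y \<in> V"
  shows "c_cnt V E x y + a_cnt V E x y + b_cnt V E x y = card {z \<in> V. E y z}"
proof -
  note b = drg_basic[OF assms(1)]
  let ?i = "dist_g E x y"
  define C where "C = {z \<in> V. E y z \<and> dist_g E x z + 1 = ?i}"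
  define A where "A = {z \<in> V. E y z \<and> dist_g E x z = ?i}"
  define B where "B = {z \<in> V. E y z \<and> dist_g E x z = ?i + 1}"
  have "{z \<in> V. E y z} = C \<union> A \<union> B"
  proof
    show "{z \<in> V. E y z} \<subseteq> C \<union> A \<union> B"
    proof
      fix z assume z: "z \<in> {z \<in> V. E y z}"
      hence "E z y" using b(3) unfolding simple_graph_def by auto
      have "dist_g E x z \<le> ?i + 1" using dist_nb[OF b(4) assms(2,3)] z by auto
      moreover have "?i \<le> dist_g E x z + 1" using dist_nb[OF b(4) assms(2) _ \<open>E z y\<close>] z by auto
      ultimately show "z \<in> C \<union> A \<union> B" using z unfolding C_def A_def B_def by auto
    qed
  qed (auto simp: C_def A_def B_def)
  moreover have "finite C" "finite A" "finite B" using b(1) unfolding C_def A_def B_def by auto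
  moreover have "C \<inter> A = {}" "(C \<union> A) \<inter> B = {}" unfolding C_def A_def B_def by auto
  ultimately have "card {z \<in> V. E y z} = card C + card A + card B"
    by (simp add: card_Un_disjoint)
  thus ?thesis unfolding c_cnt_def a_cnt_def b_cnt_def C_def A_def B_def by simp
qed

lemma drg_facts:
  assumes dr: "distance_regular V E" and D: "diameter V E \<ge> 2"
  shows "c_i V E 0 = 0" "a_i V E 0 = 0" "c_i V E 1 = 1"
    "\<And>i. 1 \<le> i \<Longrightarrow> i < diameter V E \<Longrightarrow> a_i V E i + b_i V E i + c_i V E i = b_i V E 0"
    "\<And>i. i < diameter V E \<Longrightarrow> b_i V E i > 0"
proof -
  note b = drg_basic[OF dr]
  obtain x where x: "x \<in> V" using b(2) by auto
  show "c_i V E 0 = 0" using c_i_eq[OF dr x x dist_refl] unfolding c_cnt_def by (simp add: dist_refl)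
  have S: "{z \<in> V. E x z \<and> dist_g E x z = dist_g E x x} = {}"
    using dist_1[OF b(3,4)] dist_refl[of E x] by auto
  have "a_i V E 0 = a_cnt V E x x" using a_i_eq[OF dr x x dist_refl] .
  also have "\<dots> = 0" unfolding a_cnt_def S by simp
  finally show "a_i V E 0 = 0" .
  obtain x1 y1 where xy1: "x1 \<in> V" "y1 \<in> V" "dist_g E x1 y1 = 1" using ex_pair[OF dr, of 1] D by auto
  have "{z \<in> V. E y1 z \<and> dist_g E x1 z + 1 = dist_g E x1 y1} = {x1}"
  proof -
    obtain z where "z \<in> V" "E y1 z" "E z y1" "dist_g E x1 z = 0" using dist_back[OF b(3,4) xy1(1,2)] xy1(3) by auto
    hence "z = x1" using dist_0[OF b(4) xy1(1)] by metis
    hence "E y1 x1" using \<open>E y1 z\<close> by simp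
    thus ?thesis using xy1 dist_0[OF b(4) xy1(1)] dist_refl[of E x1] by auto
  qed
  thus "c_i V E 1 = 1" using c_i_eq[OF dr xy1] unfolding c_cnt_def by simp
  show "a_i V E i + b_i V E i + c_i V E i = b_i V E 0" if i1: "1 \<le> i" "i < diameter V E" for i
  proof -
    obtain x y where xy: "x \<in> V" "y \<in> V" "dist_g E x y = i" using ex_pair[OF dr, of i] i1 by auto
    show ?thesis using partition_cnt[OF dr xy(1,2)] deg_eq[OF dr xy(2)]
      c_i_eq[OF dr xy] a_i_eq[OF dr xy] b_i_eq[OF dr xy] by simp
  qed
  show "b_i V E i > 0" if i1: "i < diameter V E" for i
  proof -
    obtain x y where xy: "x \<in> V" "y \<in> V" "dist_g E x y = Suc i" using ex_pair[OF dr, of "Suc i"] i1 by auto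
    obtain z where z: "z \<in> V" "E y z" "E z y" "dist_g E x z = i" using dist_back[OF b(3,4) xy] by auto
    have "y \<in> {w \<in> V. E z w \<and> dist_g E x w = dist_g E x z + 1}" using xy z by simp
    moreover have "finite {w \<in> V. E z w \<and> dist_g E x w = dist_g E x z + 1}" using b(1) by simp
    ultimately have "b_cnt V E x z > 0" unfolding b_cnt_def by (auto simp: card_gt_0_iff)
    thus ?thesis using b_i_eq[OF dr xy(1) z(1) z(4)] by simp
  qed
qed



lemma quad_root:
  fixes a b k x :: real
  assumes "k > 0" "a \<ge> 0" "b > 0" "k = a + b + 1" "b + (k*x+1)^2 - k*b*x^2 = 0"
  shows "x = -1"
proof -
  have id: "k*((1+a)*x+1)^2 + a*b = (1+a)*(b + (k*x+1)^2 - k*b*x^2)"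
    using assms(4) by (simp add: power2_eq_square algebra_simps)
  hence e: "k*((1+a)*x+1)^2 + a*b = 0" using assms(5) by simp
  have n1: "k*((1+a)*x+1)^2 \<ge> 0" using assms(1) by simp
  have n2: "a*b \<ge> 0" using assms by simp
  have "a*b = 0" using e n1 n2 by linarith
  hence a0: "a = 0" using assms(3) by simp
  have "k*((1+a)*x+1)^2 = 0" using e n1 n2 by linarith
  hence "(1+a)*x+1 = 0" using assms(1) by simp
  thus ?thesis using a0 by simp
qed

lemma core:
  fixes c a b s r :: "nat \<Rightarrow> real" and k \<theta>s \<theta>r :: real and D :: nat
  assumes D2: "D \<ge> 2" and c0: "c 0 = 0" and a0: "a 0 = 0" and b0: "b 0 = k" and c1: "c 1 = 1"
    and abc: "\<And>i. 1 \<le> i \<Longrightarrow> i < D \<Longrightarrow> a i + b i + c i = k"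
    and bpos: "\<And>i. i < D \<Longrightarrow> b i > 0"
    and a1: "a 1 \<ge> 0"
    and s0: "s 0 = 1" and srec: "\<And>i. i < D \<Longrightarrow> c i * s (i-1) + a i * s i + b i * s (i+1) = \<theta>s * s i"
    and r0: "r 0 = 1" and rrec: "\<And>i. i < D \<Longrightarrow> c i * r (i-1) + a i * r i + b i * r (i+1) = \<theta>r * r i"
    and s1: "s 1 \<noteq> 1" and r1: "r 1 \<noteq> 1"
  shows "(\<exists>\<theta>. \<forall>i<D. c i * (s (i-1) * r (i-1)) + a i * (s i * r i) + b i * (s (i+1) * r (i+1)) = \<theta> * (s i * r i))
     \<longleftrightarrow> (\<exists>\<epsilon>::real. \<forall>i\<in>{1..D}.
        s i * r i - s (i - 1) * r (i - 1) = \<epsilon> * (s (i - 1) * r i - s i * r (i - 1)))"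
proof -
  define g where "g = s 1 - 1"
  define h where "h = r 1 - 1"
  have kpos: "k > 0" using bpos[of 0] b0 D2 by simp
  have ths: "\<theta>s = k * s 1" using srec[of 0] D2 c0 a0 b0 s0 by simp
  have thr: "\<theta>r = k * r 1" using rrec[of 0] D2 c0 a0 b0 r0 by simp
  have srec': "b i * (s (i+1) - s i) = k*g*s i + c i * (s i - s (i-1))" if "i < D" for i
  proof (cases "i = 0")
    case True thus ?thesis using srec[of 0] D2 c0 a0 b0 s0 ths by (simp add: g_def algebra_simps)
  next
    case False
    hence "a i * s i = (k - b i - c i) * s i" using abc[of i] that by simp
    hence "a i * s i = k * s i - b i * s i - c i * s i" by (simp add: algebra_simps)
    thus ?thesis using srec[OF that] ths unfolding g_def by (simp add: algebra_simps)
  qed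
  have rrec': "b i * (r (i+1) - r i) = k*h*r i + c i * (r i - r (i-1))" if "i < D" for i
  proof (cases "i = 0")
    case True thus ?thesis using rrec[of 0] D2 c0 a0 b0 r0 thr by (simp add: h_def algebra_simps)
  next
    case False
    hence "a i * r i = (k - b i - c i) * r i" using abc[of i] that by simp
    hence "a i * r i = k * r i - b i * r i - c i * r i" by (simp add: algebra_simps)
    thus ?thesis using rrec[OF that] thr unfolding h_def by (simp add: algebra_simps)
  qed
  define T where "T i = c i * (s i - s (i-1)) * (r i - r (i-1)) + b i * (s (i+1) - s i) * (r (i+1) - r i) - k*g*h*s i*r i" for i
  define P where "P i = c i * (s (i-1) * r (i-1)) + a i * (s i * r i) + b i * (s (i+1) * r (i+1))" for i
  have E1: "P i = k * s 1 * r 1 * (s i * r i) + T i" if "i < D" for i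
  proof -
    have aa: "a i = k - b i - c i"
    proof (cases "i = 0")
      case True thus ?thesis using a0 b0 c0 by simp
    next
      case False thus ?thesis using abc[of i] that by simp
    qed
    have "b i * (s (i+1) * r (i+1) - s i * r i) = s i * (b i * (r (i+1) - r i)) + r i * (b i * (s (i+1) - s i)) + b i * (s (i+1) - s i) * (r (i+1) - r i)"
      by (simp add: algebra_simps)
    also have "\<dots> = s i * (k*h*r i + c i * (r i - r (i-1))) + r i * (k*g*s i + c i * (s i - s (i-1))) + b i * (s (i+1) - s i) * (r (i+1) - r i)"
      using srec'[OF that] rrec'[OF that] by simp
    finally have X: "b i * (s (i+1) * r (i+1) - s i * r i) = s i * (k*h*r i + c i * (r i - r (i-1))) + r i * (k*g*s i + c i * (s i - s (i-1))) + b i * (s (i+1) - s i) * (r (i+1) - r i)" .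
    have "P i = k * (s i * r i) + b i * (s (i+1) * r (i+1) - s i * r i) - c i * (s i * r i - s (i-1) * r (i-1))"
      unfolding P_def aa by (simp add: algebra_simps)
    also have "\<dots> = k * s 1 * r 1 * (s i * r i) + T i"
      unfolding X T_def g_def h_def by (simp add: algebra_simps)
    finally show ?thesis .
  qed
  define \<Phi> where "\<Phi> \<epsilon> i = (1-\<epsilon>)*s i*(r i - r (i-1)) + (1+\<epsilon>)*r i*(s i - s (i-1)) - (s i - s (i-1))*(r i - r (i-1))" for \<epsilon> i
  have Phi_eq: "\<Phi> \<epsilon> i = s i * r i - s (i - 1) * r (i - 1) - \<epsilon> * (s (i - 1) * r i - s i * r (i - 1))" for \<epsilon> i
    unfolding \<Phi>_def by (simp add: algebra_simps)
  define K where "K \<epsilon> = (1-\<epsilon>)*h + (1+\<epsilon>)*g + g*h" for \<epsilon>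
  have B: "b i * \<Phi> \<epsilon> (i+1) - c i * \<Phi> \<epsilon> i = T i + s i * r i * k * K \<epsilon>" if "i < D" for i \<epsilon>
  proof -
    have "b i * \<Phi> \<epsilon> (i+1) = (1-\<epsilon>)*s i*(b i * (r (i+1) - r i)) + (1+\<epsilon>)*r i*(b i * (s (i+1) - s i)) + b i * (s (i+1) - s i)*(r (i+1) - r i)"
      unfolding \<Phi>_def by (simp add: algebra_simps)
    also have "\<dots> = (1-\<epsilon>)*s i*(k*h*r i + c i * (r i - r (i-1))) + (1+\<epsilon>)*r i*(k*g*s i + c i * (s i - s (i-1))) + b i * (s (i+1) - s i)*(r (i+1) - r i)"
      using srec'[OF that] rrec'[OF that] by simp
    finally have X: "b i * \<Phi> \<epsilon> (i+1) = (1-\<epsilon>)*s i*(k*h*r i + c i * (r i - r (i-1))) + (1+\<epsilon>)*r i*(k*g*s i + c i * (s i - s (i-1))) + b i * (s (i+1) - s i)*(r (i+1) - r i)" .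
    show ?thesis unfolding X unfolding \<Phi>_def T_def K_def by (simp add: algebra_simps)
  qed
  have T0: "T 0 = 0" unfolding T_def using c0 b0 s0 r0 by (simp add: g_def h_def)
  have Phi1: "k * \<Phi> \<epsilon> 1 = k * K \<epsilon>" for \<epsilon>
    using B[of 0 \<epsilon>] D2 b0 c0 T0 s0 r0 by simp
  hence Phi1': "\<Phi> \<epsilon> 1 = K \<epsilon>" for \<epsilon> using kpos by simp
  show ?thesis
  proof
    assume "\<exists>\<theta>. \<forall>i<D. c i * (s (i-1) * r (i-1)) + a i * (s i * r i) + b i * (s (i+1) * r (i+1)) = \<theta> * (s i * r i)"
    then obtain \<theta> where th: "\<And>i. i < D \<Longrightarrow> P i = \<theta> * (s i * r i)" unfolding P_def by blast
    have "\<theta> = k * s 1 * r 1" using th[of 0] E1[of 0] D2 T0 s0 r0 by simp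
    hence Tz: "T i = 0" if "i < D" for i using th[OF that] E1[OF that] by simp
    obtain \<epsilon> where K0: "K \<epsilon> = 0"
    proof (cases "g = h")
      case False
      show ?thesis
        apply (rule that[of "-(g+h+g*h)/(g-h)"])
      proof -
        have "g - h \<noteq> 0" using False by simp
        hence "(-(g+h+g*h)/(g-h))*(g-h) = -(g+h+g*h)" by simp
        moreover have "K e = g+h+g*h + e*(g-h)" for e unfolding K_def by (simp add: algebra_simps)
        ultimately show "K (-(g+h+g*h)/(g-h)) = 0" by simp
      qed
    next
      case True
      have gnz: "g \<noteq> 0" using s1 g_def by simp
      have sr1: "s 1 = r 1" using True g_def h_def by simp
      have e1: "b 1 * (s 2 - s 1) = g * (k * s 1 + 1)"
        using srec'[of 1] D2 c1 s0 by (simp add: g_def algebra_simps numeral_2_eq_2)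
      have e2': "b 1 * (r 2 - r 1) = h * (k * r 1 + 1)"
        using rrec'[of 1] D2 c1 r0 by (simp add: h_def algebra_simps numeral_2_eq_2)
      have e2: "b 1 * (r 2 - r 1) = g * (k * s 1 + 1)" using e2' True sr1 by simp
      have "T 1 = 0" using Tz[of 1] D2 by simp
      hence "g*g + b 1 * (s 2 - s 1) * (r 2 - r 1) - k*g*g*s 1*s 1 = 0"
        unfolding T_def using c1 s0 r0 True sr1 by (simp add: g_def numeral_2_eq_2)
      hence "b 1 * (g*g + b 1 * (s 2 - s 1) * (r 2 - r 1) - k*g*g*s 1*s 1) = 0" by simp
      hence "b 1 * (g*g) + (b 1 * (s 2 - s 1)) * (b 1 * (r 2 - r 1)) - k*b 1*g*g*s 1*s 1 = 0"
        by (simp add: algebra_simps)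
      hence "b 1 * (g*g) + (g * (k * s 1 + 1)) * (g * (k * s 1 + 1)) - k*b 1*g*g*s 1*s 1 = 0"
        unfolding e1 e2 .
      hence "(g*g) * (b 1 + (k * s 1 + 1)^2 - k * b 1 * (s 1)^2) = 0"
        by (simp add: algebra_simps power2_eq_square)
      hence q: "b 1 + (k * s 1 + 1)^2 - k * b 1 * (s 1)^2 = 0" using gnz by simp
      have "s 1 = -1"
        apply (rule quad_root[of k "a 1" "b 1"])
        using kpos a1 bpos[of 1] D2 abc[of 1] c1 q by auto
      hence "K 0 = 0" unfolding K_def using True g_def by simp
      thus ?thesis using that by blast
    qed
    have "\<Phi> \<epsilon> i = 0" if "1 \<le> i" "i \<le> D" for i
      using that
    proof (induction i)
      case 0 thus ?case by simp
    next
      case (Suc j)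
      show ?case
      proof (cases "j = 0")
        case True thus ?thesis using Phi1' K0 by simp
      next
        case False
        hence "\<Phi> \<epsilon> j = 0" using Suc by simp
        moreover have "j < D" using Suc by simp
        ultimately have "b j * \<Phi> \<epsilon> (j+1) = 0" using B[of j \<epsilon>] Tz[of j] K0 by simp
        thus ?thesis using bpos[of j] \<open>j < D\<close> by simp
      qed
    qed
    thus "\<exists>\<epsilon>::real. \<forall>i\<in>{1..D}. s i * r i - s (i - 1) * r (i - 1) = \<epsilon> * (s (i - 1) * r i - s i * r (i - 1))"
      using Phi_eq by (intro exI[of _ \<epsilon>]) auto
  next
    assume "\<exists>\<epsilon>::real. \<forall>i\<in>{1..D}. s i * r i - s (i - 1) * r (i - 1) = \<epsilon> * (s (i - 1) * r i - s i * r (i - 1))"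
    then obtain \<epsilon> where e0: "\<forall>i\<in>{1..D}. s i * r i - s (i - 1) * r (i - 1) = \<epsilon> * (s (i - 1) * r i - s i * r (i - 1))" by blast
    have e: "\<Phi> \<epsilon> i = 0" if "1 \<le> i" "i \<le> D" for i using e0 that unfolding Phi_eq by simp
    have K0: "K \<epsilon> = 0" using Phi1' e[of 1] D2 by simp
    have Tz: "T i = 0" if "i < D" for i
    proof (cases "i = 0")
      case True thus ?thesis using T0 by simp
    next
      case False
      thus ?thesis using B[OF that, of \<epsilon>] e[of i] e[of "i+1"] K0 that by simp
    qed
    show "\<exists>\<theta>. \<forall>i<D. c i * (s (i-1) * r (i-1)) + a i * (s i * r i) + b i * (s (i+1) * r (i+1)) = \<theta> * (s i * r i)"
      apply (rule exI[of _ "k * s 1 * r 1"])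
      using E1 Tz unfolding P_def by simp
  qed
qed

theorem theorem7p1:
  fixes V :: "'a set" and E :: "'a \<Rightarrow> 'a \<Rightarrow> bool" and \<sigma> \<rho> :: "nat \<Rightarrow> real"
  assumes "distance_regular V E"
    and "diameter V E \<ge> 3"
    and "nontrivial_pcs V E \<sigma>"
    and "nontrivial_pcs V E \<rho>"
  shows "tight_pair V E \<sigma> \<rho> \<longleftrightarrow>
    (\<exists>\<epsilon>::real. \<forall>i\<in>{1..diameter V E}.
        \<sigma> i * \<rho> i - \<sigma> (i - 1) * \<rho> (i - 1) = \<epsilon> * (\<sigma> (i - 1) * \<rho> i - \<sigma> i * \<rho> (i - 1)))"
proof -
  have D2: "diameter V E \<ge> 2" using assms(2) by simp
  note F = drg_facts[OF assms(1) D2]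
  obtain \<theta>s where ps: "pseudo_cosine_seq V E \<theta>s \<sigma>" and s1: "\<sigma> 1 \<noteq> 1"
    using assms(3) unfolding nontrivial_pcs_def is_pseudo_cosine_def by blast
  obtain \<theta>r where pr: "pseudo_cosine_seq V E \<theta>r \<rho>" and r1: "\<rho> 1 \<noteq> 1"
    using assms(4) unfolding nontrivial_pcs_def is_pseudo_cosine_def by blast
  have C: "(\<exists>\<theta>. \<forall>i<diameter V E. real (c_i V E i) * (\<sigma> (i-1) * \<rho> (i-1)) + real (a_i V E i) * (\<sigma> i * \<rho> i) + real (b_i V E i) * (\<sigma> (i+1) * \<rho> (i+1)) = \<theta> * (\<sigma> i * \<rho> i))
     \<longleftrightarrow> (\<exists>\<epsilon>::real. \<forall>i\<in>{1..diameter V E}.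
        \<sigma> i * \<rho> i - \<sigma> (i - 1) * \<rho> (i - 1) = \<epsilon> * (\<sigma> (i - 1) * \<rho> i - \<sigma> i * \<rho> (i - 1)))"
  proof (rule core[where k = "real (b_i V E 0)" and \<theta>s = \<theta>s and \<theta>r = \<theta>r])
    show "\<And>i. 1 \<le> i \<Longrightarrow> i < diameter V E \<Longrightarrow> real (a_i V E i) + real (b_i V E i) + real (c_i V E i) = real (b_i V E 0)"
      using F(4) by (metis of_nat_add)
  qed (use D2 F ps pr s1 r1 in \<open>auto simp: pseudo_cosine_seq_def\<close>)
  have "tight_pair V E \<sigma> \<rho> \<longleftrightarrow> (\<exists>\<theta>. pseudo_cosine_seq V E \<theta> (\<lambda>i. \<sigma> i * \<rho> i))"
    unfolding tight_pair_def is_pseudo_cosine_def using ps pr by blast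
  also have "\<dots> \<longleftrightarrow> (\<exists>\<theta>. \<forall>i<diameter V E. real (c_i V E i) * (\<sigma> (i-1) * \<rho> (i-1)) + real (a_i V E i) * (\<sigma> i * \<rho> i) + real (b_i V E i) * (\<sigma> (i+1) * \<rho> (i+1)) = \<theta> * (\<sigma> i * \<rho> i))"
    unfolding pseudo_cosine_seq_def using ps pr unfolding pseudo_cosine_seq_def by simp
  finally show ?thesis using C by simp
qed

end
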